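(* Let $\phi$ be the real root of $x^3=x^2+x+1$. For any positive integer $k$ and any integer $n>0.2\phi^{3k/2}$, there exists a positive tribonacci sequence of length $k$ terminating at $n$.
   Context: A tribonacci sequence of length $k$ is a sequence of integers $\langle a_i\rangle_{i=1}^k$ such that $a_i=a_{i-1}+a_{i-2}+a_{i-3}$ for all $4\le i\le k$. It terminates at $a_k$, and it is positive if $a_1,a_2,a_3>0$ (for length less than 3, all terms are required to be positive). *)

theory Defs
  imports Complex_Main
begin

text \<open>A sequence of length k is a function a :: nat \<Rightarrow> int, of which only the
  values a 1, ..., a k matter.\<close>

definition tribonacci_seq :: "nat \<Rightarrow> (nat \<Rightarrow> int) \<Rightarrow> bool" where
  "tribonacci_seq k a \<longleftrightarrow>
     (\<forall>i. 4 \<le> i \<and> i \<le> k \<longrightarrow> a i = a (i - 1) + a (i - 2) + a (i - 3))"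

definition positive_tribonacci :: "nat \<Rightarrow> (nat \<Rightarrow> int) \<Rightarrow> bool" where
  "positive_tribonacci k a \<longleftrightarrow>
     tribonacci_seq k a \<and> (\<forall>i. 1 \<le> i \<and> i \<le> min k 3 \<longrightarrow> a i > 0)"

end

theory Submission
  imports Defs
begin

definition ell :: "real \<Rightarrow> real \<Rightarrow> real \<Rightarrow> real \<Rightarrow> real" where
  "ell p x y z = x + (p^2-p)*y + p*z"
definition qf :: "real \<Rightarrow> real \<Rightarrow> real \<Rightarrow> real \<Rightarrow> real" where
  "qf p x y z = (x - (p^2-p-1)*y)^2 + (1-p)*(x - (p^2-p-1)*y)*(z-p*y) + (p^2-p-1)*(z-p*y)^2"

lemma phi_bounds:
  fixes p :: real assumes h: "p^3 = p^2+p+1"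
  shows "1.8392 < p \<and> p < 1.8393"
proof -
  have e: "(p+1/2)^2 = p^2+p+1/4" by (simp add: power2_eq_square algebra_simps)
  have "p^3 > 0" using h e zero_le_power2[of "p+1/2"] by linarith
  have p0: "p > 0"
  proof (rule ccontr)
    assume "\<not> p > 0"
    hence "p * p^2 \<le> 0" by (simp add: mult_nonpos_nonneg)
    thus False using \<open>p^3 > 0\<close> by (simp add: power2_eq_square power3_eq_cube)
  qed
  have p1: "p > 1"
  proof (rule ccontr)
    assume "\<not> p > 1"
    hence "p^2 * (p - 1) \<le> 0" by (simp add: mult_nonneg_nonpos)
    moreover have "p^3 - p^2 = p^2*(p-1)" by (simp add: algebra_simps power2_eq_square power3_eq_cube)
    ultimately show False using h p0 by linarith
  qed
  have key: "\<And>c. p^3 - p^2 - p - 1 - (c^3 - c^2 - c - 1) = (p - c) * (p^2 + p*c + c^2 - p - c - 1)"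
    by (simp add: algebra_simps power2_eq_square power3_eq_cube)
  have pos: "\<And>c::real. c \<ge> 1.8 \<Longrightarrow> p^2 + p*c + c^2 - p - c - 1 > 0"
  proof -
    fix c :: real assume "c \<ge> 1.8"
    have "p^2 \<ge> p" using p1 by (simp add: power2_eq_square)
    moreover have "p*c \<ge> c" using p1 \<open>c \<ge> 1.8\<close> by simp
    moreover have "c^2 \<ge> 1.8*c" using \<open>c \<ge> 1.8\<close> by (simp add: power2_eq_square)
    ultimately show "p^2 + p*c + c^2 - p - c - 1 > 0" using \<open>c \<ge> 1.8\<close> by linarith
  qed
  have a: "1.8392 < p"
  proof (rule ccontr)
    assume "\<not> 1.8392 < p"
    hence "(p - 1.8392) * (p^2 + p*1.8392 + 1.8392^2 - p - 1.8392 - 1) \<le> 0"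
      using pos[of "1.8392"] by (simp add: mult_nonpos_nonneg)
    then show False using key[of "1.8392"] h by (simp add: power2_eq_square power3_eq_cube)
  qed
  have b: "p < 1.8393"
  proof (rule ccontr)
    assume "\<not> p < 1.8393"
    hence "(p - 1.8393) * (p^2 + p*1.8393 + 1.8393^2 - p - 1.8393 - 1) \<ge> 0"
      using pos[of "1.8393"] by simp
    then show False using key[of "1.8393"] h by (simp add: power2_eq_square power3_eq_cube)
  qed
  show ?thesis using a b by simp
qed

lemma ell_step: fixes p :: real assumes h: "p^3 = p^2+p+1"
  shows "ell p x y z = p * ell p (z-y-x) x y"
  using h unfolding ell_def by algebra

lemma qf_step: fixes p :: real assumes h: "p^3 = p^2+p+1"
  shows "qf p (z-y-x) x y = p * qf p x y z"
  using h unfolding qf_def by algebra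


lemma bform: fixes A B D X Z :: real
  assumes "A > 0" "4*A*D \<ge> B^2"
  shows "A*X^2 + B*X*Z + D*Z^2 \<ge> 0"
proof -
  have "4*A*(A*X^2 + B*X*Z + D*Z^2) = (2*A*X+B*Z)^2 + (4*A*D-B^2)*Z^2"
    by (simp add: algebra_simps power2_eq_square)
  moreover have "(2*A*X+B*Z)^2 + (4*A*D-B^2)*Z^2 \<ge> 0" using assms(2) by simp
  ultimately have "4*A*(A*X^2 + B*X*Z + D*Z^2) \<ge> 0" by simp
  thus ?thesis using assms(1) by (simp add: zero_le_mult_iff)
qed

lemma lin_bound: fixes p X Z al be :: real
  assumes "95 - al^2 > 0" "4*(95 - al^2)*(95*(p^2-p-1) - be^2) \<ge> (95*(1-p) - 2*al*be)^2"
  shows "(al*X + be*Z)^2 \<le> 95*(X^2 + (1-p)*X*Z + (p^2-p-1)*Z^2)"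
proof -
  have "(95 - al^2)*X^2 + (95*(1-p) - 2*al*be)*X*Z + (95*(p^2-p-1) - be^2)*Z^2 \<ge> 0"
    using bform[OF assms] .
  moreover have "95*(X^2 + (1-p)*X*Z + (p^2-p-1)*Z^2) - (al*X + be*Z)^2 =
     (95 - al^2)*X^2 + (95*(1-p) - 2*al*be)*X*Z + (95*(p^2-p-1) - be^2)*Z^2"
    by (simp add: algebra_simps power2_eq_square)
  ultimately show ?thesis by linarith
qed

lemma sq_lt: fixes f l :: real assumes "f^2 < l^2" "l > 0" shows "f < l"
proof (rule ccontr)
  assume "\<not> f < l" hence "l \<le> f" by simp
  hence "l*l \<le> f*f" using assms(2) by (intro mult_mono) auto
  thus False using assms(1) by (simp add: power2_eq_square)
qed

lemma positivity:
  fixes p x y z :: real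
  assumes h: "p^3 = p^2+p+1" and lpos: "ell p x y z > 0" and lq: "(ell p x y z)^2 > 95 * qf p x y z"
  shows "x > 0 \<and> y > 0 \<and> z > 0"
proof -
  obtain lo hi where b: "1.8392 < p" "p < 1.8393" using phi_bounds[OF h] by blast
  have "1.8392*1.8392 < p*p" using b by (intro mult_strict_mono) auto
  hence p2l: "p^2 > 3.38265" by (simp add: power2_eq_square)
  have "p*p < 1.8393*1.8393" using b by (intro mult_strict_mono) auto
  hence p2h: "p^2 < 3.38303" by (simp add: power2_eq_square)
  define X where "X = x - (p^2-p-1)*y"
  define Z where "Z = z - p*y"
  define l where "l = ell p x y z"
  have Q: "qf p x y z = X^2 + (1-p)*X*Z + (p^2-p-1)*Z^2" unfolding qf_def X_def Z_def by simp
  define N where "N = 3*p^2-2*p-1"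
  have Npos: "N > 0" unfolding N_def using b p2l by (simp; linarith)
  have f1: "(1*X + p*Z)^2 \<le> 95*(X^2 + (1-p)*X*Z + (p^2-p-1)*Z^2)"
  proof (rule lin_bound)
    show "95 - 1^2 > (0::real)" by simp
    have "4*94*(95*(p^2-p-1) - p^2) - (95*(1-p) - 2*p)^2 = -44745 - 17290*p + 25935*p^2"
      by (simp add: algebra_simps power2_eq_square)
    moreover have "-44745 - 17290*p + 25935*p^2 \<ge> 0" using b p2l p2h by (simp; linarith)
    ultimately show "4*(95 - 1^2)*(95*(p^2-p-1) - p^2) \<ge> (95*(1-p) - 2*1*p)^2" by simp
  qed
  have f2: "((-2-2*p-p^2)*X + p*Z)^2 \<le> 95*(X^2 + (1-p)*X*Z + (p^2-p-1)*Z^2)"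
  proof (rule lin_bound)
    have "95 - (-2-2*p-p^2)^2 = 86 - 14*p - 14*p^2" using h by algebra
    moreover have "86 - 14*p - 14*p^2 > 0" using b p2l p2h by (simp; linarith)
    ultimately show "95 - (-2-2*p-p^2)^2 > 0" by linarith
    have "4*(95 - (-2-2*p-p^2)^2)*(95*(p^2-p-1) - p^2) - (95*(1-p) - 2*(-2-2*p-p^2)*p)^2
          = -46265 - 19570*p + 24415*p^2"
      using h by algebra
    moreover have "-46265 - 19570*p + 24415*p^2 \<ge> 0" using b p2l p2h by (simp; linarith)
    ultimately show "4*(95 - (-2-2*p-p^2)^2)*(95*(p^2-p-1) - p^2) \<ge> (95*(1-p) - 2*(-2-2*p-p^2)*p)^2" by linarith
  qed
  have f3: "(1*X + (1-3*p+p^2)*Z)^2 \<le> 95*(X^2 + (1-p)*X*Z + (p^2-p-1)*Z^2)"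
  proof (rule lin_bound)
    show "95 - 1^2 > (0::real)" by simp
    have "4*94*(95*(p^2-p-1) - (1-3*p+p^2)^2) - (95*(1-p) - 2*(1-3*p+p^2))^2
          = -43225 - 15770*p + 25175*p^2"
      using h by algebra
    moreover have "-43225 - 15770*p + 25175*p^2 \<ge> 0" using b p2l p2h by (simp; linarith)
    ultimately show "4*(95 - 1^2)*(95*(p^2-p-1) - (1-3*p+p^2)^2) \<ge> (95*(1-p) - 2*1*(1-3*p+p^2))^2" by simp
  qed
  have lpos': "l > 0" using lpos l_def by simp
  have lq': "95*(X^2 + (1-p)*X*Z + (p^2-p-1)*Z^2) < l^2" using lq Q l_def by simp
  have g1: "1*X + p*Z < l"
  proof (rule sq_lt[OF _ lpos'])
    show "(1*X + p*Z)^2 < l^2" using f1 lq' by linarith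
  qed
  have g2: "(-2-2*p-p^2)*X + p*Z < l"
  proof (rule sq_lt[OF _ lpos'])
    show "((-2-2*p-p^2)*X + p*Z)^2 < l^2" using f2 lq' by linarith
  qed
  have g3: "1*X + (1-3*p+p^2)*Z < l"
  proof (rule sq_lt[OF _ lpos'])
    show "(1*X + (1-3*p+p^2)*Z)^2 < l^2" using f3 lq' by linarith
  qed
  have iy: "N*y = l - (1*X + p*Z)" unfolding N_def l_def X_def Z_def ell_def by (simp add: algebra_simps power2_eq_square)
  have ix: "p*N*x = l - ((-2-2*p-p^2)*X + p*Z)" unfolding N_def l_def X_def Z_def ell_def using h by algebra
  have iz: "N*z = p*(l - (1*X + (1-3*p+p^2)*Z))" unfolding N_def l_def X_def Z_def ell_def using h by algebra
  have ny: "N*y > 0" using iy g1 by simp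
  have yp: "y > 0" using ny Npos by (simp add: zero_less_mult_iff)
  have pnx: "(p*N)*x > 0" using ix g2 by simp
  have pn: "p*N > 0" using Npos b by simp
  have xp: "x > 0" using pnx pn by (simp add: zero_less_mult_iff)
  have nz: "N*z > 0" using iz g3 b by simp
  have zp: "z > 0" using nz Npos by (simp add: zero_less_mult_iff)
  show ?thesis using xp yp zp by simp
qed


fun gs :: "int \<Rightarrow> int \<Rightarrow> int \<Rightarrow> nat \<Rightarrow> int" where
  "gs n v u 0 = n"
| "gs n v u (Suc 0) = v"
| "gs n v u (Suc (Suc 0)) = u"
| "gs n v u (Suc (Suc (Suc m))) = gs n v u m - gs n v u (Suc m) - gs n v u (Suc (Suc m))"

lemma gs_inv:
  fixes p :: real assumes h: "p^3 = p^2+p+1"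
  shows "p^m * ell p (gs n v u (m+2)) (gs n v u (m+1)) (gs n v u m) = ell p u v n
       \<and> qf p (gs n v u (m+2)) (gs n v u (m+1)) (gs n v u m) = p^m * qf p u v n"
proof (induction m)
  case 0
  then show ?case by (simp add: numeral_2_eq_2)
next
  case (Suc m)
  define x where "x = real_of_int (gs n v u (m+2))"
  define y where "y = real_of_int (gs n v u (m+1))"
  define z where "z = real_of_int (gs n v u m)"
  have nx: "real_of_int (gs n v u (Suc m + 2)) = z - y - x"
    unfolding x_def y_def z_def by (simp add: numeral_2_eq_2)
  have ny: "real_of_int (gs n v u (Suc m + 1)) = x" unfolding x_def by (simp add: numeral_2_eq_2)
  have nz: "real_of_int (gs n v u (Suc m)) = y" unfolding y_def by simp
  have IH1: "p^m * ell p x y z = ell p u v n" using Suc.IH x_def y_def z_def by simp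
  have IH2: "qf p x y z = p^m * qf p u v n" using Suc.IH x_def y_def z_def by simp
  have "p^(Suc m) * ell p (z-y-x) x y = p^m * ell p x y z"
    using ell_step[OF h, of x y z] by simp
  moreover have "qf p (z-y-x) x y = p^(Suc m) * qf p u v n"
    using qf_step[OF h, of z y x] IH2 by simp
  ultimately show ?case using IH1 nx ny nz by simp
qed


lemma powr_sq: fixes p :: real assumes "p > 0"
  shows "(p powr (3 * real k / 2))^2 = p^(3*k)"
proof -
  have "(p powr (3 * real k / 2))^2 = p powr (3 * real k / 2) * p powr (3 * real k / 2)"
    by (simp add: power2_eq_square)
  also have "\<dots> = p powr (3 * real k / 2 + 3 * real k / 2)" by (rule powr_add[symmetric])
  also have "3 * real k / 2 + 3 * real k / 2 = real (3*k)" by simp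
  also have "p powr real (3*k) = p^(3*k)" using assms by (rule powr_realpow)
  finally show ?thesis .
qed

lemma main_big:
  fixes p :: real and m :: nat and n :: int
  assumes h: "p^3 = p^2+p+1" and m1: "m \<ge> 1"
    and hn: "real_of_int n > (02/10) * p powr (3 * real (m+3) / 2)"
  shows "\<exists>u v. gs n v u (m+2) > 0 \<and> gs n v u (m+1) > 0 \<and> gs n v u m > 0"
proof -
  have b1: "(18392/10000) < p" and b2: "p < (18393/10000)" using phi_bounds[OF h] by simp_all
  have "(18392/10000)*(18392/10000) < p*p" using b1 by (intro mult_strict_mono) auto
  hence p2l: "p^2 > (338265/100000)" by (simp add: power2_eq_square)
  have "p*p < (18393/10000)*(18393/10000)" using b1 b2 by (intro mult_strict_mono) auto
  hence p2h: "p^2 < (338303/100000)" by (simp add: power2_eq_square)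
  have pp: "p > 0" using b1 by simp
  define r where "r = real_of_int n"
  define ip where "ip = p^2-p-1"
  define u where "u = \<lfloor>r*ip^2 + 1/2\<rfloor>"
  define v where "v = \<lfloor>r*ip + 1/2\<rfloor>"
  define d1 where "d1 = real_of_int u - r*ip^2"
  define d2 where "d2 = real_of_int v - r*ip"
  have d1b: "-1/2 < d1 \<and> d1 \<le> 1/2" unfolding d1_def u_def
    using floor_correct[of "r*ip^2 + 1/2"] by linarith
  have d2b: "-1/2 < d2 \<and> d2 \<le> 1/2" unfolding d2_def v_def
    using floor_correct[of "r*ip + 1/2"] by linarith
  define E where "E = ell p u v r"
  define Qe where "Qe = qf p u v r"
  have uu: "real_of_int u = r*ip^2 + d1" using d1_def by simp
  have vv: "real_of_int v = r*ip + d2" using d2_def by simp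
  have Eeq: "E = r*(-1+4*p-p^2) + d1 + (p^2-p)*d2"
    unfolding E_def ell_def uu vv ip_def using h by algebra
  have Qeq: "Qe = d1^2 + (2+p-p^2)*(d1*d2) + (1+2*p-p^2)*d2^2"
    unfolding Qe_def qf_def uu vv ip_def using h by algebra
  have p3: "p^3 \<ge> (62/10)" using h p2l b1 by linarith
  have p9: "p^9 \<ge> 238"
  proof -
    have "((62/10)::real)^3 \<le> (p^3)^3" using p3 by (intro power_mono) auto
    moreover have "((62/10)::real)^3 = 238328/1000" by (simp add: eval_nat_numeral)
    ultimately show ?thesis by (simp add: power_mult[symmetric])
  qed
  have "(p^3)^(m+3) \<ge> (p^3)^4" using p3 m1 by (intro power_increasing) auto
  moreover have "((62/10)::real)^4 \<le> (p^3)^4" using p3 by (intro power_mono) auto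
  moreover have "((62/10)::real)^4 = 14776336/10000" by (simp add: eval_nat_numeral)
  ultimately have p3k0: "(p^3)^(m+3) \<ge> 1400" by linarith
  have "(p^3)^(m+3) = p^(3*(m+3))" by (simp only: power_mult)
  hence p3k: "p^(3*(m+3)) \<ge> 1400" using p3k0 by simp
  have rpos0: "(02/10) * p powr (3 * real (m+3) / 2) \<ge> 0" by simp
  have "((02/10) * p powr (3 * real (m+3) / 2))^2 < r^2"
    using hn rpos0 r_def by (intro power_strict_mono) auto
  moreover have "((02/10) * p powr (3 * real (m+3) / 2))^2 = (4/100) * (p powr (3 * real (m+3) / 2))^2"
    by (simp add: power2_eq_square)
  moreover have "(p powr (3 * real (m+3) / 2))^2 = p^(3*(m+3))" by (rule powr_sq[OF pp])
  ultimately have r2: "(004/100) * p^(3*(m+3)) < r^2" by simp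
  have r0: "r > 0" using hn rpos0 r_def by linarith
  have r72: "r \<ge> (72/10)"
  proof (rule ccontr)
    assume "\<not> r \<ge> (72/10)"
    hence "r*r \<le> (72/10)*(72/10)" using r0 by (intro mult_mono) auto
    thus False using r2 p3k by (simp add: power2_eq_square)
  qed
  have t1: "\<bar>(p^2-p)*d2\<bar> \<le> (0772/1000)"
  proof -
    have "\<bar>(p^2-p)*d2\<bar> = \<bar>p^2-p\<bar> * \<bar>d2\<bar>" by (simp add: abs_mult)
    also have "\<dots> \<le> (1544/1000) * (1/2)" using d2b p2h b1 p2l b2 by (intro mult_mono) auto
    finally show ?thesis by simp
  qed
  have Eb: "E \<ge> (279/100) * r" using Eeq t1 d1b r72 p2h b1 r0
  proof -
    have "r*(-1+4*p-p^2) \<ge> r*(297/100)" using r0 p2h b1 by (intro mult_left_mono) auto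
    thus ?thesis using Eeq t1 d1b r72 by linarith
  qed
  have dd: "\<bar>d1*d2\<bar> \<le> 1/4"
  proof -
    have "\<bar>d1*d2\<bar> = \<bar>d1\<bar>*\<bar>d2\<bar>" by (simp add: abs_mult)
    also have "\<dots> \<le> (1/2)*(1/2)" using d1b d2b by (intro mult_mono) auto
    finally show ?thesis by simp
  qed
  have sq1: "d1^2 \<le> 1/4"
  proof -
    have "\<bar>d1\<bar>*\<bar>d1\<bar> \<le> (1/2)*(1/2)" using d1b by (intro mult_mono) auto
    thus ?thesis by (simp add: power2_eq_square abs_mult[symmetric])
  qed
  have sq2: "d2^2 \<le> 1/4"
  proof -
    have "\<bar>d2\<bar>*\<bar>d2\<bar> \<le> (1/2)*(1/2)" using d2b by (intro mult_mono) auto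
    thus ?thesis by (simp add: power2_eq_square abs_mult[symmetric])
  qed
  have q2: "(2+p-p^2)*(d1*d2) \<le> (04567/10000) * (1/4)"
  proof -
    have "(2+p-p^2)*(d1*d2) \<le> \<bar>2+p-p^2\<bar> * \<bar>d1*d2\<bar>" by (simp add: abs_mult[symmetric])
    also have "\<dots> \<le> (04567/10000) * (1/4)" using dd b2 p2l b1 p2h by (intro mult_mono) auto
    finally show ?thesis .
  qed
  have q3: "(1+2*p-p^2)*d2^2 \<le> (13/10) * (1/4)"
    using sq2 b2 p2l by (intro mult_mono) auto
  have Qb: "Qe \<le> (069/100)" using Qeq sq1 q2 q3 by linarith
  define P where "P = p^(3*m)"
  define P9 where "P9 = (p^9::real)"
  have "3*(m+3) = 3*m + 9" by simp
  hence pm: "p^(3*(m+3)) = P * P9" unfolding P_def P9_def by (simp only: power_add)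
  have pmpos: "P > 0" unfolding P_def using pp by simp
  have c0: "Qe * P \<le> (69/100) * P" using Qb pmpos by (intro mult_right_mono) auto
  have c1: "P * 238 \<le> P * P9" using p9 pmpos unfolding P9_def by (intro mult_left_mono) auto
  have c2: "(4/100) * (P * P9) < r^2" using r2 pm by simp
  have E2: "E^2 \<ge> ((279/100)*r)^2" using Eb r0 by (intro power_mono) auto
  moreover have "((279/100)*r)^2 = (77841/10000) * r^2" by (simp add: power2_eq_square)
  ultimately have E2': "E^2 \<ge> (77841/10000) * r^2" by simp
  have k1: "P * 238 < 25 * r^2" using c1 c2 by linarith
  have k2: "95 * (Qe * P) \<le> (6555/100) * P" using c0 by linarith
  have k3: "(6555/100) * P * 238 < (6555/100) * 25 * r^2" using k1 by linarith
  have key0: "E^2 > 95 * (Qe * P)" using k2 k3 E2' zero_le_power2[of r] by linarith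
  have key: "E^2 > 95 * Qe * p^(3*m)" using key0 unfolding P_def by (simp add: mult.assoc)
  define x where "x = real_of_int (gs n v u (m+2))"
  define y where "y = real_of_int (gs n v u (m+1))"
  define z where "z = real_of_int (gs n v u m)"
  have I1: "p^m * ell p x y z = E" and I2: "qf p x y z = p^m * Qe"
    using gs_inv[OF h, of m n v u] unfolding x_def y_def z_def E_def Qe_def r_def by auto
  have pmp: "p^m > 0" using pp by simp
  have Epos: "E > 0" using Eb r0 by simp
  have "p^m * ell p x y z > 0" using I1 Epos by simp
  hence lpos: "ell p x y z > 0" using pmp pp by (simp add: zero_less_mult_iff)
  have "(p^m)^2 * (ell p x y z)^2 = E^2" using I1 by (simp add: power_mult_distrib[symmetric])
  moreover have "(p^m)^2 * (95 * qf p x y z) = 95 * Qe * p^(3*m)"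
  proof -
    have "p^(m*3) = (p^m)^3" by (rule power_mult)
    hence q3: "p^(3*m) = (p^m)^2 * p^m" by (simp add: mult.commute power2_eq_square power3_eq_cube)
    show ?thesis unfolding I2 q3 by (simp add: ac_simps)
  qed
  ultimately have "(p^m)^2 * (95 * qf p x y z) < (p^m)^2 * (ell p x y z)^2" using key by simp
  hence lq: "(ell p x y z)^2 > 95 * qf p x y z" by (rule mult_left_less_imp_less) simp
  have "x > 0 \<and> y > 0 \<and> z > 0" using positivity[OF h lpos lq] .
  thus ?thesis unfolding x_def y_def z_def by auto
qed

theorem theorem3:
  fixes phi :: real and k :: nat and n :: int
  assumes "phi ^ 3 = phi ^ 2 + phi + 1"
    and "k > 0"
    and "real_of_int n > 0.2 * phi powr (3 * real k / 2)"
  shows "\<exists>a. positive_tribonacci k a \<and> a k = n"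
proof (cases "k \<le> 3")
  case True
  have "0.2 * phi powr (3 * real k / 2) \<ge> 0" by simp
  hence npos: "n > 0" using assms(3) by linarith
  have "positive_tribonacci k (\<lambda>_. n)"
    unfolding positive_tribonacci_def tribonacci_seq_def using True npos by auto
  thus ?thesis by blast
next
  case False
  define m where "m = k - 3"
  have km: "k = m + 3" using False m_def by simp
  obtain u v where uv: "gs n v u (m+2) > 0" "gs n v u (m+1) > 0" "gs n v u m > 0"
  proof -
    have m1: "m \<ge> 1" using False m_def by simp
    have "real_of_int n > 0.2 * phi powr (3 * real (m+3) / 2)" using assms(3) km by simp
    from main_big[OF assms(1) m1 this] show ?thesis using that by blast
  qed
  define a where "a = (\<lambda>i. gs n v u (k - i))"
  have tri: "tribonacci_seq k a"
    unfolding tribonacci_seq_def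
  proof (intro allI impI)
    fix i assume i: "4 \<le> i \<and> i \<le> k"
    define j where "j = k - i"
    have e1: "k - (i-1) = Suc j" "k - (i-2) = Suc (Suc j)" "k - (i-3) = Suc (Suc (Suc j))" "k - i = j"
      using i j_def by auto
    show "a i = a (i - 1) + a (i - 2) + a (i - 3)"
      unfolding a_def e1 by simp
  qed
  have pos: "\<forall>i. 1 \<le> i \<and> i \<le> min k 3 \<longrightarrow> a i > 0"
  proof (intro allI impI)
    fix i assume i: "1 \<le> i \<and> i \<le> min k 3"
    hence "i = 1 \<or> i = 2 \<or> i = 3" by auto
    moreover have "k - 1 = m+2" "k - 2 = m+1" "k - 3 = m" using km by auto
    ultimately show "a i > 0" unfolding a_def using uv by auto
  qed
  have "a k = n" unfolding a_def by simp
  thus ?thesis using tri pos unfolding positive_tribonacci_def by blast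
qed

end
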